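(* Let $P$ be a poset. If $P$ is well-quasi-ordered and the set $\mathcal{J}^{\neg\downarrow}(P)$ of non-principal ideals of $P$ is finite, then $P$ is better-quasi-ordered.
   Context: An ideal of $P$ is a nonempty initial segment of $P$ which is up-directed (any two elements have an upper bound in it); it is principal if it has a largest element. A quasi-ordered set is well-quasi-ordered (wqo) if it is well-founded and has no infinite antichain. Barriers and bqo: finite subsets of $\mathbb{N}$ are identified with their increasing enumerations. For finite $s,t\subseteq\mathbb{N}$ write $s\triangleleft t$ if there is a finite $r\subseteq\mathbb{N}$ such that $s$ is a proper initial segment of $r$ and $t$ is $r$ with its least element removed. A barrier is an infinite set $B$ of finite subsets of $\mathbb{N}$, no member of which is a proper subset of another, such that every infinite $X\subseteq\bigcup B$ has a nonempty initial segment belonging to $B$. A barrier is well-ordered by the lexicographic order; its order type is the type of this well-order. A map $f$ from a barrier $B$ into a quasi-ordered set $Q$ is good if there exist $s,t\in B$ with $s\triangleleft t$ and $f(s)\leq f(t)$, and bad otherwise. For a countable ordinal $\alpha$, $Q$ is $\alpha$-bqo if every map from a barrier of order type at most $\alpha$ into $Q$ is good; $Q$ is better-quasi-ordered (bqo) if it is $\alpha$-bqo for every countable ordinal $\alpha$. *)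

theory Defs
  imports Main
begin

definition quasi_order_on :: "'a set \<Rightarrow> ('a \<Rightarrow> 'a \<Rightarrow> bool) \<Rightarrow> bool" where
  "quasi_order_on P le \<longleftrightarrow> (\<forall>x\<in>P. le x x) \<and>
     (\<forall>x\<in>P. \<forall>y\<in>P. \<forall>z\<in>P. le x y \<longrightarrow> le y z \<longrightarrow> le x z)"

definition poset_on :: "'a set \<Rightarrow> ('a \<Rightarrow> 'a \<Rightarrow> bool) \<Rightarrow> bool" where
  "poset_on P le \<longleftrightarrow> quasi_order_on P le \<and>
     (\<forall>x\<in>P. \<forall>y\<in>P. le x y \<longrightarrow> le y x \<longrightarrow> x = y)"

definition ideal_of :: "'a set \<Rightarrow> ('a \<Rightarrow> 'a \<Rightarrow> bool) \<Rightarrow> 'a set \<Rightarrow> bool" where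
  "ideal_of P le I \<longleftrightarrow> I \<subseteq> P \<and> I \<noteq> {} \<and>
     (\<forall>x\<in>I. \<forall>y\<in>P. le y x \<longrightarrow> y \<in> I) \<and>
     (\<forall>x\<in>I. \<forall>y\<in>I. \<exists>z\<in>I. le x z \<and> le y z)"

definition principal :: "('a \<Rightarrow> 'a \<Rightarrow> bool) \<Rightarrow> 'a set \<Rightarrow> bool" where
  "principal le I \<longleftrightarrow> (\<exists>m\<in>I. \<forall>x\<in>I. le x m)"

definition nonprincipal_ideals :: "'a set \<Rightarrow> ('a \<Rightarrow> 'a \<Rightarrow> bool) \<Rightarrow> 'a set set" where
  "nonprincipal_ideals P le = {I. ideal_of P le I \<and> \<not> principal le I}"

definition wellfounded_on :: "'a set \<Rightarrow> ('a \<Rightarrow> 'a \<Rightarrow> bool) \<Rightarrow> bool" where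
  "wellfounded_on P le \<longleftrightarrow>
     \<not> (\<exists>g::nat \<Rightarrow> 'a. (\<forall>n. g n \<in> P) \<and> (\<forall>n. le (g (Suc n)) (g n) \<and> \<not> le (g n) (g (Suc n))))"

definition antichain_on :: "('a \<Rightarrow> 'a \<Rightarrow> bool) \<Rightarrow> 'a set \<Rightarrow> bool" where
  "antichain_on le A \<longleftrightarrow> (\<forall>x\<in>A. \<forall>y\<in>A. x \<noteq> y \<longrightarrow> \<not> le x y \<and> \<not> le y x)"

definition wqo_on :: "'a set \<Rightarrow> ('a \<Rightarrow> 'a \<Rightarrow> bool) \<Rightarrow> bool" where
  "wqo_on P le \<longleftrightarrow> quasi_order_on P le \<and> wellfounded_on P le \<and>
     \<not> (\<exists>A. A \<subseteq> P \<and> infinite A \<and> antichain_on le A)"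

definition init_seg :: "nat set \<Rightarrow> nat set \<Rightarrow> bool" where
  "init_seg s X \<longleftrightarrow> s \<subseteq> X \<and> (\<forall>x\<in>s. \<forall>y\<in>X. y < x \<longrightarrow> y \<in> s)"

definition tri :: "nat set \<Rightarrow> nat set \<Rightarrow> bool" where
  "tri s t \<longleftrightarrow> (\<exists>r. finite r \<and> init_seg s r \<and> s \<noteq> r \<and> t = r - {Min r})"

definition barrier :: "nat set set \<Rightarrow> bool" where
  "barrier B \<longleftrightarrow> infinite B \<and> (\<forall>s\<in>B. finite s) \<and>
     (\<forall>s\<in>B. \<forall>t\<in>B. \<not> s \<subset> t) \<and>
     (\<forall>X. X \<subseteq> \<Union>B \<longrightarrow> infinite X \<longrightarrow> (\<exists>s\<in>B. s \<noteq> {} \<and> init_seg s X))"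

text \<open>Lexicographic order on a barrier (sets identified with increasing enumerations),
  as a reflexive relation so that it can be compared with ordinals via ordLeq.\<close>
definition barrier_lex :: "nat set set \<Rightarrow> nat set rel" where
  "barrier_lex B = {(s, t). s \<in> B \<and> t \<in> B \<and>
     (s = t \<or> (sorted_list_of_set s, sorted_list_of_set t) \<in> lexord {(x, y). x < y})}"

definition good_map :: "('a \<Rightarrow> 'a \<Rightarrow> bool) \<Rightarrow> nat set set \<Rightarrow> (nat set \<Rightarrow> 'a) \<Rightarrow> bool" where
  "good_map le B f \<longleftrightarrow> (\<exists>s\<in>B. \<exists>t\<in>B. tri s t \<and> le (f s) (f t))"

text \<open>Countable ordinals are represented by well-orders on subsets of nat.\<close>
definition alpha_bqo_on :: "nat rel \<Rightarrow> 'a set \<Rightarrow> ('a \<Rightarrow> 'a \<Rightarrow> bool) \<Rightarrow> bool" where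
  "alpha_bqo_on \<alpha> P le \<longleftrightarrow> (\<forall>B f. barrier B \<longrightarrow> (barrier_lex B, \<alpha>) \<in> ordLeq \<longrightarrow>
     f ` B \<subseteq> P \<longrightarrow> good_map le B f)"

definition bqo_on :: "'a set \<Rightarrow> ('a \<Rightarrow> 'a \<Rightarrow> bool) \<Rightarrow> bool" where
  "bqo_on P le \<longleftrightarrow> quasi_order_on P le \<and> (\<forall>\<alpha>::nat rel. Well_order \<alpha> \<longrightarrow> alpha_bqo_on \<alpha> P le)"

end

theory Submission
  imports Defs "HOL-Library.Ramsey" "HOL-Library.Infinite_Set"
begin

lemma wqo_mono_subseq:
  assumes wqo: "wqo_on P le" and gP: "\<And>n. g n \<in> P"
  shows "\<exists>H::nat set. infinite H \<and> (\<forall>i\<in>H. \<forall>j\<in>H. i < j \<longrightarrow> le (g i) (g j))"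
proof -
  have qo: "quasi_order_on P le" and wf: "wellfounded_on P le"
    and noac: "\<not> (\<exists>A. A \<subseteq> P \<and> infinite A \<and> antichain_on le A)"
    using wqo unfolding wqo_on_def by auto
  define c where "c X = (if le (g (Min X)) (g (Max X)) then 0 else
      if le (g (Max X)) (g (Min X)) then 1 else (2::nat))" for X
  have "\<forall>x\<in>(UNIV::nat set). \<forall>y\<in>UNIV. x \<noteq> y \<longrightarrow> c {x, y} < 3"
    unfolding c_def by auto
  from Ramsey2[OF infinite_UNIV_nat this] obtain Y t where
    Y: "infinite Y" "t < 3" "\<forall>x\<in>Y. \<forall>y\<in>Y. x \<noteq> y \<longrightarrow> c {x, y} = t" by blast
  have cij: "c {i, j} = (if le (g i) (g j) then 0 else if le (g j) (g i) then 1 else 2)"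
    if "i < j" for i j
    using that unfolding c_def by (simp add: min_def max_def)
  consider "t = 0" | "t = 1" | "t = 2" using Y(2) by linarith
  then show ?thesis
  proof cases
    case 1
    then show ?thesis using Y cij by (metis less_irrefl zero_neq_numeral zero_neq_one)
  next
    case 2
    define h where "h = enumerate Y"
    have hs: "h n < h (Suc n)" for n unfolding h_def using enumerate_step Y(1) by blast
    have hY: "h n \<in> Y" for n unfolding h_def using enumerate_in_set Y(1) by blast
    have c1: "c {h n, h (Suc n)} = 1" for n using Y(3) hY hs 2 by (metis less_irrefl)
    have "le (g (h (Suc n))) (g (h n)) \<and> \<not> le (g (h n)) (g (h (Suc n)))" for n
    proof -
      have "(if le (g (h n)) (g (h (Suc n))) then 0 else if le (g (h (Suc n))) (g (h n)) then 1 else 2) = (1::nat)"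
        using cij[OF hs[of n]] c1[of n] by simp
      then show ?thesis by (simp split: if_splits)
    qed
    then have "(\<forall>n. (g \<circ> h) n \<in> P) \<and> (\<forall>n. le ((g \<circ> h) (Suc n)) ((g \<circ> h) n) \<and> \<not> le ((g \<circ> h) n) ((g \<circ> h) (Suc n)))"
      using gP by simp
    then have False using wf unfolding wellfounded_on_def by blast
    then show ?thesis ..
  next
    case 3
    have inc: "\<not> le (g i) (g j) \<and> \<not> le (g j) (g i)" if "i \<in> Y" "j \<in> Y" "i < j" for i j
      using Y(3) that 3 cij[OF that(3)] by (auto split: if_splits)
    have refl: "le x x" if "x \<in> P" for x using qo that unfolding quasi_order_on_def by auto
    have inj: "inj_on g Y"
    proof (rule inj_onI)
      fix i j assume "i \<in> Y" "j \<in> Y" "g i = g j"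
      then show "i = j" using inc refl gP by (metis linorder_neqE_nat)
    qed
    have "infinite (g ` Y)" using inj Y(1) finite_imageD by blast
    moreover have "antichain_on le (g ` Y)"
      unfolding antichain_on_def using inc by (metis image_iff linorder_neqE_nat)
    moreover have "g ` Y \<subseteq> P" using gP by auto
    ultimately show ?thesis using noac by blast
  qed
qed

definition mn :: "nat set \<Rightarrow> nat" where "mn Z = (LEAST n. n \<in> Z)"

lemma mn_in: "Z \<noteq> {} \<Longrightarrow> mn Z \<in> Z"
  unfolding mn_def by (metis LeastI ex_in_conv)

lemma mn_le: "x \<in> Z \<Longrightarrow> mn Z \<le> x"
  unfolding mn_def by (rule Least_le)

lemma init_seg_cmp:
  assumes "init_seg s Z" "init_seg t Z" shows "s \<subseteq> t \<or> t \<subseteq> s"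
proof (rule ccontr)
  assume "\<not> (s \<subseteq> t \<or> t \<subseteq> s)"
  then obtain x y where "x \<in> s" "x \<notin> t" "y \<in> t" "y \<notin> s" by blast
  note xy = this
  have "x \<in> Z" "y \<in> Z" using xy assms unfolding init_seg_def by auto
  have "x \<noteq> y" using xy by auto
  then consider "x < y" | "y < x" by linarith
  then show False
  proof cases
    case 1 then show False using xy \<open>x \<in> Z\<close> assms(2) unfolding init_seg_def by blast
  next
    case 2 then show False using xy \<open>y \<in> Z\<close> assms(1) unfolding init_seg_def by blast
  qed
qed

lemma barrier_inf: "barrier B \<Longrightarrow> infinite B"
  unfolding barrier_def by (elim conjE)

lemma barrier_fin: "barrier B \<Longrightarrow> s \<in> B \<Longrightarrow> finite s"
  unfolding barrier_def by (elim conjE) (erule bspec)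

lemma barrier_anti: "barrier B \<Longrightarrow> s \<in> B \<Longrightarrow> t \<in> B \<Longrightarrow> \<not> s \<subset> t"
  unfolding barrier_def by (elim conjE) (erule ballE; erule ballE; blast)

lemma barrier_ex0: assumes "barrier B" "X \<subseteq> \<Union>B" "infinite X" shows "\<exists>s\<in>B. s \<noteq> {} \<and> init_seg s X"
proof -
  have "\<forall>X. X \<subseteq> \<Union>B \<longrightarrow> infinite X \<longrightarrow> (\<exists>s\<in>B. s \<noteq> {} \<and> init_seg s X)"
    using assms(1) unfolding barrier_def by (elim conjE)
  then show ?thesis using assms(2,3) by blast
qed

lemma barrier_nonempty: assumes "barrier B" "s \<in> B" shows "s \<noteq> {}"
proof
  assume "s = {}"
  have "infinite B" using assms barrier_inf by blast
  have "\<not> B \<subseteq> {{}}" using \<open>infinite B\<close> finite_subset by blast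
  then obtain t where "t \<in> B" "t \<noteq> {}" by blast
  then show False using barrier_anti[OF assms(1,2) \<open>t \<in> B\<close>] \<open>s = {}\<close> by blast
qed

lemma barrier_Union_infinite: assumes "barrier B" shows "infinite (\<Union>B)"
proof
  assume "finite (\<Union>B)"
  then have "finite (Pow (\<Union>B))" by simp
  moreover have "B \<subseteq> Pow (\<Union>B)" by auto
  ultimately have "finite B" by (rule finite_subset[rotated])
  then show False using assms barrier_inf by blast
qed

lemma barrier_unique:
  assumes "barrier B" "s \<in> B" "t \<in> B" "init_seg s Z" "init_seg t Z" shows "s = t"
  using init_seg_cmp[OF assms(4,5)] barrier_anti[OF assms(1,2,3)] barrier_anti[OF assms(1,3,2)] by blast

lemma barrier_ex:
  assumes "barrier B" "Z \<subseteq> \<Union>B" "infinite Z" shows "\<exists>s\<in>B. init_seg s Z"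
  using barrier_ex0[OF assms] by blast

definition bf :: "nat set set \<Rightarrow> nat set \<Rightarrow> nat set" where
  "bf B Z = (THE s. s \<in> B \<and> init_seg s Z)"

lemma bf_eq: assumes "barrier B" "s \<in> B" "init_seg s Z" shows "bf B Z = s"
  unfolding bf_def
proof (rule the_equality)
  show "s \<in> B \<and> init_seg s Z" using assms by blast
  fix s' assume "s' \<in> B \<and> init_seg s' Z"
  then show "s' = s" using barrier_unique[OF assms(1) _ assms(2) _ assms(3)] by blast
qed

lemma bf_props:
  assumes "barrier B" "Z \<subseteq> \<Union>B" "infinite Z" shows "bf B Z \<in> B \<and> init_seg (bf B Z) Z"
proof -
  obtain s where s: "s \<in> B" "init_seg s Z" using barrier_ex[OF assms] by blast
  then have "bf B Z = s" using bf_eq[OF assms(1)] by blast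
  then show ?thesis using s by simp
qed

lemma init_seg_mn:
  assumes "init_seg s Z" "s \<noteq> {}" shows "mn Z \<in> s"
proof -
  obtain x where x: "x \<in> s" using assms by auto
  then have "x \<in> Z" using assms unfolding init_seg_def by auto
  then have m: "mn Z \<in> Z" "mn Z \<le> x" using mn_in mn_le by auto
  show ?thesis
  proof (cases "mn Z = x")
    case True then show ?thesis using x by simp
  next
    case False then have "mn Z < x" using m by simp
    then show ?thesis using x m(1) assms(1) unfolding init_seg_def by blast
  qed
qed

lemma shift_tri:
  assumes B: "barrier B" and Z: "Z \<subseteq> \<Union>B" "infinite Z"
  shows "tri (bf B Z) (bf B (Z - {mn Z}))"
proof -
  define m where "m = mn Z"
  define Z' where "Z' = Z - {m}"
  define s where "s = bf B Z"
  define t where "t = bf B Z'"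
  have mZ: "m \<in> Z" unfolding m_def using Z mn_in by (metis finite.emptyI)
  have s: "s \<in> B" "init_seg s Z" using bf_props[OF B Z] unfolding s_def by auto
  have Z': "Z' \<subseteq> \<Union>B" "infinite Z'" using Z unfolding Z'_def by auto
  have t: "t \<in> B" "init_seg t Z'" using bf_props[OF B Z'] unfolding t_def by auto
  have sne: "s \<noteq> {}" using barrier_nonempty B s by auto
  have ms: "m \<in> s" using init_seg_mn[OF s(2) sne] unfolding m_def .
  have mt: "m \<notin> t" using t unfolding init_seg_def Z'_def by auto
  define r where "r = insert m t"
  have fr: "finite r" unfolding r_def using barrier_fin B t by auto
  have mle: "m \<le> x" if "x \<in> Z" for x using that mn_le unfolding m_def by auto
  have r1: "r \<subseteq> Z" using mZ t unfolding r_def init_seg_def Z'_def by auto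
  have r2: "y \<in> r" if "x \<in> r" "y \<in> Z" "y < x" for x y
  proof (cases "x = m")
    case True then show ?thesis using mle that by fastforce
  next
    case False
    then have "x \<in> t" using that unfolding r_def by auto
    show ?thesis
    proof (cases "y = m")
      case True then show ?thesis unfolding r_def by auto
    next
      case False
      then have "y \<in> Z'" using that unfolding Z'_def by auto
      then show ?thesis using t \<open>x \<in> t\<close> that unfolding init_seg_def r_def by auto
    qed
  qed
  have r_init: "init_seg r Z" unfolding init_seg_def using r1 r2 by blast
  have "s \<subseteq> r"
  proof (rule ccontr)
    assume "\<not> s \<subseteq> r"
    then have "r \<subseteq> s" using init_seg_cmp[OF s(2) r_init] by auto
    then have "t \<subset> s" using ms mt unfolding r_def by auto
    then show False using barrier_anti[OF B t(1) s(1)] by blast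
  qed
  moreover have "s \<noteq> r"
  proof
    assume "s = r"
    then have "t \<subset> s" using ms mt unfolding r_def by auto
    then show False using barrier_anti[OF B t(1) s(1)] by blast
  qed
  moreover have "init_seg s r"
    using \<open>s \<subseteq> r\<close> s(2) r_init unfolding init_seg_def by blast
  moreover have "Min r = m"
  proof -
    have "m \<in> r" unfolding r_def by auto
    moreover have "\<forall>x\<in>r. m \<le> x" using r_init mle unfolding init_seg_def by auto
    ultimately show ?thesis using fr by (meson Min_eqI)
  qed
  moreover have "t = r - {m}" unfolding r_def using mt by auto
  ultimately have "tri s t" unfolding tri_def using fr by (intro exI[of _ r]) simp
  then show ?thesis unfolding s_def t_def Z'_def m_def .
qed

lemma barrier_tri_exists:
  assumes "barrier B" shows "\<exists>s\<in>B. \<exists>t\<in>B. tri s t"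
proof -
  have Z: "\<Union>B \<subseteq> \<Union>B" "infinite (\<Union>B)" using barrier_Union_infinite assms by auto
  have Z': "\<Union>B - {mn (\<Union>B)} \<subseteq> \<Union>B" "infinite (\<Union>B - {mn (\<Union>B)})" using Z by auto
  show ?thesis using shift_tri[OF assms Z] bf_props[OF assms Z] bf_props[OF assms Z'] by blast
qed

lemma barrierI:
  assumes "infinite B" "\<And>s. s \<in> B \<Longrightarrow> finite s" "\<And>s t. s \<in> B \<Longrightarrow> t \<in> B \<Longrightarrow> \<not> s \<subset> t"
    "\<And>X. X \<subseteq> \<Union>B \<Longrightarrow> infinite X \<Longrightarrow> \<exists>s\<in>B. s \<noteq> {} \<and> init_seg s X"
  shows "barrier B"
  unfolding barrier_def using assms by (intro conjI) blast+

lemma barrier_restrict: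
  assumes B: "barrier B" and Y: "Y \<subseteq> \<Union>B" "infinite Y"
  shows "barrier {s\<in>B. s \<subseteq> Y}" "\<Union>{s\<in>B. s \<subseteq> Y} \<subseteq> Y"
proof -
  let ?B = "{s\<in>B. s \<subseteq> Y}"
  show U: "\<Union>?B \<subseteq> Y" by auto
  have inf: "infinite ?B"
  proof
    assume fin: "finite ?B"
    then have "finite (\<Union>?B)" using barrier_fin[OF B] by auto
    then have X: "infinite (Y - \<Union>?B)" "Y - \<Union>?B \<subseteq> \<Union>B" using Y by auto
    obtain s where "s \<in> B" "s \<noteq> {}" "init_seg s (Y - \<Union>?B)"
      using barrier_ex[OF B X(2,1)] barrier_nonempty[OF B] by blast
    then show False unfolding init_seg_def by blast
  qed
  show "barrier ?B"
  proof (rule barrierI)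
    show "infinite ?B" by (rule inf)
    show "finite s" if "s \<in> ?B" for s using that barrier_fin[OF B] by blast
    show "\<not> s \<subset> t" if "s \<in> ?B" "t \<in> ?B" for s t using that barrier_anti[OF B] by blast
    fix X assume X: "X \<subseteq> \<Union>?B" "infinite X"
    then have X': "X \<subseteq> \<Union>B" by auto
    obtain s where s: "s \<in> B" "init_seg s X" using barrier_ex[OF B X' X(2)] by blast
    have "s \<noteq> {}" using barrier_nonempty[OF B s(1)] .
    moreover have "s \<subseteq> Y" using s(2) X(1) U unfolding init_seg_def by blast
    ultimately show "\<exists>s\<in>?B. s \<noteq> {} \<and> init_seg s X" using s by blast
  qed
qed

definition acc :: "nat set set \<Rightarrow> nat set \<Rightarrow> nat set \<Rightarrow> bool" where
  "acc F N s \<longleftrightarrow> (\<forall>Z. Z \<subseteq> N \<longrightarrow> infinite Z \<longrightarrow> (\<exists>u. finite u \<and> init_seg u Z \<and> s \<union> u \<in> F))"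

definition rej :: "nat set set \<Rightarrow> nat set \<Rightarrow> nat set \<Rightarrow> bool" where
  "rej F M s \<longleftrightarrow> (\<forall>N. N \<subseteq> M \<longrightarrow> infinite N \<longrightarrow> \<not> acc F N s)"

definition dec :: "nat set set \<Rightarrow> nat set \<Rightarrow> nat set \<Rightarrow> bool" where
  "dec F M s \<longleftrightarrow> acc F M s \<or> rej F M s"

definition tlN :: "nat set \<Rightarrow> nat set \<Rightarrow> nat set" where
  "tlN N s = {n \<in> N. \<forall>x\<in>s. x < n}"

lemma acc_mono: assumes "N \<subseteq> M" "acc F M s" shows "acc F N s"
  unfolding acc_def
proof (intro allI impI)
  fix Z assume "Z \<subseteq> N" "infinite Z"
  have "Z \<subseteq> M" using \<open>Z \<subseteq> N\<close> assms(1) by (rule subset_trans)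
  then show "\<exists>u. finite u \<and> init_seg u Z \<and> s \<union> u \<in> F" using assms(2) \<open>infinite Z\<close> unfolding acc_def by blast
qed

lemma rej_mono: assumes "N \<subseteq> M" "rej F M s" shows "rej F N s"
  unfolding rej_def
proof (intro allI impI)
  fix Z assume "Z \<subseteq> N" "infinite Z"
  have "Z \<subseteq> M" using \<open>Z \<subseteq> N\<close> assms(1) by (rule subset_trans)
  then show "\<not> acc F Z s" using assms(2) \<open>infinite Z\<close> unfolding rej_def by blast
qed

lemma dec_mono: "N \<subseteq> M \<Longrightarrow> dec F M s \<Longrightarrow> dec F N s"
  unfolding dec_def using acc_mono rej_mono by blast

lemma dec_ex: assumes "infinite M" shows "\<exists>N \<subseteq> M. infinite N \<and> dec F N s"
proof (cases "rej F M s")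
  case True then show ?thesis using assms unfolding dec_def by blast
next
  case False
  then obtain N where "N \<subseteq> M" "infinite N" "acc F N s" unfolding rej_def by blast
  then show ?thesis unfolding dec_def by blast
qed

lemma dec_ex_fin:
  assumes "finite S" "infinite M"
  shows "\<exists>N \<subseteq> M. infinite N \<and> (\<forall>s\<in>S. dec F N s)"
  using assms(1)
proof (induction S rule: finite_induct)
  case empty then show ?case using assms(2) by blast
next
  case (insert x S)
  then obtain N where N: "N \<subseteq> M" "infinite N" "\<forall>s\<in>S. dec F N s" by blast
  obtain N' where N': "N' \<subseteq> N" "infinite N'" "dec F N' x" using dec_ex[OF N(2)] by blast
  have "\<forall>s\<in>insert x S. dec F N' s" using N(3) N'(1,3) dec_mono by blast
  then show ?case using N N' by blast
qed

lemma tlN_infinite: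
  assumes "infinite N" "finite s" shows "infinite (tlN N s)"
proof -
  have "tlN N s = N - (\<Union>x\<in>s. {..x})" unfolding tlN_def by (auto simp: not_le)
  moreover have "finite (\<Union>x\<in>s. {..x})" using assms(2) by simp
  ultimately show ?thesis using assms(1) by (metis Diff_infinite_finite)
qed

lemma tlN_empty [simp]: "tlN N {} = N" unfolding tlN_def by simp

lemma tlN_sub: "tlN N s \<subseteq> N" unfolding tlN_def by auto

definition stp :: "nat set set \<Rightarrow> nat set \<Rightarrow> nat set" where
  "stp F M = (SOME N. N \<subseteq> {n\<in>M. mn M < n} \<and> infinite N \<and> (\<forall>s. s \<subseteq> {..mn M} \<longrightarrow> dec F N s))"

lemma stp_props:
  assumes "infinite M"
  shows "stp F M \<subseteq> {n\<in>M. mn M < n} \<and> infinite (stp F M) \<and> (\<forall>s. s \<subseteq> {..mn M} \<longrightarrow> dec F (stp F M) s)"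
proof -
  have "infinite {n\<in>M. mn M < n}" using tlN_infinite[OF assms, of "{mn M}"] unfolding tlN_def by simp
  from dec_ex_fin[OF _ this, of "Pow {..mn M}" F]
  obtain N where "N \<subseteq> {n\<in>M. mn M < n}" "infinite N" "\<forall>s\<in>Pow {..mn M}. dec F N s" by auto
  then have "\<exists>N. N \<subseteq> {n\<in>M. mn M < n} \<and> infinite N \<and> (\<forall>s. s \<subseteq> {..mn M} \<longrightarrow> dec F N s)" by blast
  then show ?thesis unfolding stp_def by (rule someI_ex)
qed

primrec Msq :: "nat set set \<Rightarrow> nat set \<Rightarrow> nat \<Rightarrow> nat set" where
  "Msq F M 0 = M"
| "Msq F M (Suc i) = stp F (Msq F M i)"

lemma galvin_diag:
  assumes M: "infinite M"
  shows "\<exists>N0 \<subseteq> M. infinite N0 \<and> (\<forall>s. finite s \<longrightarrow> s \<subseteq> N0 \<longrightarrow> dec F (tlN N0 s) s)"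
proof -
  let ?M = "Msq F M"
  have inf: "infinite (?M i)" for i
    by (induction i) (use M stp_props in auto)
  have P: "?M (Suc i) \<subseteq> {n\<in>?M i. mn (?M i) < n}" "\<forall>s. s \<subseteq> {..mn (?M i)} \<longrightarrow> dec F (?M (Suc i)) s" for i
    using stp_props[OF inf[of i], of F] by auto
  have sub1: "?M (Suc i) \<subseteq> ?M i" for i using P(1)[of i] by auto
  have sub: "?M j \<subseteq> ?M i" if "i \<le> j" for i j
    using that
  proof (induction j)
    case 0 then show ?case by simp
  next
    case (Suc j) then show ?case using sub1[of j] by (metis le_Suc_eq order_refl subset_trans)
  qed
  define a where "a i = mn (?M (Suc i))" for i
  have a_in: "a i \<in> ?M (Suc i)" for i unfolding a_def using mn_in inf by (metis finite.emptyI)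
  have a_step: "a i < a (Suc i)" for i
    using a_in[of "Suc i"] P(1)[of "Suc i"] unfolding a_def by auto
  have sm: "strict_mono a" using a_step strict_mono_Suc_iff by blast
  define N0 where "N0 = range a"
  have N0M: "N0 \<subseteq> M" unfolding N0_def using a_in sub[of 0] by fastforce
  have N0inf: "infinite N0" unfolding N0_def using sm strict_mono_imp_inj_on
    by (metis finite_imageD infinite_UNIV_nat)
  have key: "dec F (tlN N0 s) s" if s: "finite s" "s \<subseteq> N0" for s
  proof (cases "s = {}")
    case True
    have "dec F (?M (Suc 0)) {}" using P(2)[of 0] by blast
    moreover have "N0 \<subseteq> ?M (Suc 0)"
    proof
      fix x assume "x \<in> N0"
      then obtain j where "x = a j" unfolding N0_def by blast
      then show "x \<in> ?M (Suc 0)" using a_in[of j] sub[of "Suc 0" "Suc j"] by auto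
    qed
    ultimately have "dec F N0 {}" using dec_mono by blast
    then show ?thesis using True by simp
  next
    case False
    have "Max s \<in> s" using s False by simp
    then obtain i where i: "Max s = a i" using s unfolding N0_def by blast
    have "s \<subseteq> {..mn (?M (Suc i))}"
    proof
      fix x assume "x \<in> s"
      then have "x \<le> Max s" using s(1) by simp
      then show "x \<in> {..mn (?M (Suc i))}" using i unfolding a_def by simp
    qed
    then have d: "dec F (?M (Suc (Suc i))) s" using P(2) by blast
    have "tlN N0 s \<subseteq> ?M (Suc (Suc i))"
    proof
      fix n assume n: "n \<in> tlN N0 s"
      then obtain j where j: "n = a j" unfolding tlN_def N0_def by blast
      have "a i < a j" using n j \<open>Max s \<in> s\<close> i unfolding tlN_def by auto
      then have "Suc i \<le> j" using sm by (simp add: strict_mono_less)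
      then show "n \<in> ?M (Suc (Suc i))" using a_in[of j] sub[of "Suc (Suc i)" "Suc j"] j by auto
    qed
    then show ?thesis using d dec_mono by blast
  qed
  show ?thesis using N0M N0inf key by blast
qed

lemma A4:
  assumes s: "finite s" "s \<subseteq> N0" and r: "rej F (tlN N0 s) s"
  shows "finite {n \<in> tlN N0 s. acc F (tlN N0 (insert n s)) (insert n s)}"
proof (rule ccontr)
  define G where "G = {n \<in> tlN N0 s. acc F (tlN N0 (insert n s)) (insert n s)}"
  assume "infinite {n \<in> tlN N0 s. acc F (tlN N0 (insert n s)) (insert n s)}"
  then have Ginf: "infinite G" unfolding G_def .
  have GT: "G \<subseteq> tlN N0 s" unfolding G_def by blast
  have "acc F G s" unfolding acc_def
  proof (intro allI impI)
    fix Z assume Z: "Z \<subseteq> G" "infinite Z"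
    define n where "n = mn Z"
    have nZ: "n \<in> Z" unfolding n_def using Z(2) mn_in by (metis finite.emptyI)
    define Z' where "Z' = Z - {n}"
    have Z'inf: "infinite Z'" unfolding Z'_def using Z(2) by simp
    have Z'sub: "Z' \<subseteq> tlN N0 (insert n s)"
    proof
      fix z assume z: "z \<in> Z'"
      then have zG: "z \<in> tlN N0 s" using Z(1) GT unfolding Z'_def by blast
      have "n \<le> z" using z mn_le unfolding Z'_def n_def by blast
      moreover have "z \<noteq> n" using z unfolding Z'_def by blast
      ultimately have "n < z" by simp
      then show "z \<in> tlN N0 (insert n s)" using zG unfolding tlN_def by blast
    qed
    have "n \<in> G" using nZ Z(1) by blast
    then have "acc F (tlN N0 (insert n s)) (insert n s)" unfolding G_def by blast
    then obtain u' where u': "finite u'" "init_seg u' Z'" "insert n s \<union> u' \<in> F"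
      using Z'sub Z'inf unfolding acc_def by blast
    define u where "u = insert n u'"
    have "finite u" using u'(1) unfolding u_def by simp
    moreover have "init_seg u Z"
    proof -
      have "u \<subseteq> Z" using nZ u'(2) unfolding u_def init_seg_def Z'_def by blast
      moreover have "y \<in> u" if "x \<in> u" "y \<in> Z" "y < x" for x y
      proof (cases "x = n")
        case True
        then show ?thesis using that mn_le unfolding n_def by fastforce
      next
        case False
        then have xu': "x \<in> u'" using that(1) unfolding u_def by blast
        show ?thesis
        proof (cases "y = n")
          case True then show ?thesis unfolding u_def by blast
        next
          case False
          then have "y \<in> Z'" using that(2) unfolding Z'_def by blast
          then show ?thesis using xu' that(3) u'(2) unfolding init_seg_def u_def by blast
        qed
      qed
      ultimately show ?thesis unfolding init_seg_def by blast
    qed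
    moreover have "s \<union> u = insert n s \<union> u'" unfolding u_def by blast
    then have "s \<union> u \<in> F" using u'(3) by simp
    ultimately show "\<exists>u. finite u \<and> init_seg u Z \<and> s \<union> u \<in> F" by blast
  qed
  then show False using r GT Ginf unfolding rej_def by blast
qed

primrec bseq :: "(nat \<Rightarrow> nat) \<Rightarrow> nat set \<Rightarrow> nat \<Rightarrow> nat" where
  "bseq th N 0 = (LEAST n. n \<in> N \<and> th 0 < n)"
| "bseq th N (Suc k) = (LEAST n. n \<in> N \<and> bseq th N k < n \<and> th (bseq th N k) < n)"

lemma bseq_props:
  assumes "infinite N"
  shows "bseq th N 0 \<in> N \<and> th 0 < bseq th N 0"
    "bseq th N (Suc k) \<in> N \<and> bseq th N k < bseq th N (Suc k) \<and> th (bseq th N k) < bseq th N (Suc k)"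
proof -
  obtain n where "n \<in> N" "th 0 < n" using assms by (meson infinite_nat_iff_unbounded)
  then have "n \<in> N \<and> th 0 < n" by simp
  then show "bseq th N 0 \<in> N \<and> th 0 < bseq th N 0" unfolding bseq.simps(1) by (rule LeastI)
next
  obtain n where "n \<in> N" "max (bseq th N k) (th (bseq th N k)) < n" using assms by (meson infinite_nat_iff_unbounded)
  then have "n \<in> N \<and> bseq th N k < n \<and> th (bseq th N k) < n" by simp
  then show "bseq th N (Suc k) \<in> N \<and> bseq th N k < bseq th N (Suc k) \<and> th (bseq th N k) < bseq th N (Suc k)"
    unfolding bseq.simps(2) by (rule LeastI)
qed

lemma galvin_thin:
  assumes N0: "infinite N0" and D: "\<forall>s. finite s \<longrightarrow> s \<subseteq> N0 \<longrightarrow> dec F (tlN N0 s) s"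
    and r0: "rej F N0 {}"
  shows "\<exists>N \<subseteq> N0. infinite N \<and> (\<forall>s. finite s \<longrightarrow> s \<subseteq> N \<longrightarrow> s \<notin> F)"
proof -
  define good where "good s \<longleftrightarrow> rej F (tlN N0 s) s" for s
  define Bd where "Bd s = {n \<in> tlN N0 s. \<not> good (insert n s)}" for s
  have Bd_fin: "finite (Bd s)" if "finite s" "s \<subseteq> N0" "good s" for s
  proof -
    have "Bd s \<subseteq> {n \<in> tlN N0 s. acc F (tlN N0 (insert n s)) (insert n s)}"
    proof
      fix n assume n: "n \<in> Bd s"
      then have "n \<in> N0" "n \<in> tlN N0 s" unfolding Bd_def tlN_def by auto
      then have "finite (insert n s)" "insert n s \<subseteq> N0" using that by auto
      then have "dec F (tlN N0 (insert n s)) (insert n s)" using D by blast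
      then show "n \<in> {n \<in> tlN N0 s. acc F (tlN N0 (insert n s)) (insert n s)}"
        using n unfolding Bd_def good_def dec_def by blast
    qed
    moreover have "finite {n \<in> tlN N0 s. acc F (tlN N0 (insert n s)) (insert n s)}"
      using A4[of s N0 F] that unfolding good_def by blast
    ultimately show ?thesis by (rule finite_subset)
  qed
  define Fam where "Fam m = Bd ` {s. s \<subseteq> N0 \<inter> {..m} \<and> good s}" for m
  define thr where "thr m = Max (insert 0 (\<Union>(Fam m)))" for m
  have Fam_fin: "finite (\<Union>(Fam m))" for m
  proof -
    define S where "S = {s. s \<subseteq> N0 \<inter> {..m} \<and> good s}"
    have "S \<subseteq> Pow {..m}" unfolding S_def by blast
    then have f1: "finite S" by (rule finite_subset) simp
    have f2: "finite X" if "X \<in> Bd ` S" for X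
    proof -
      from that obtain s where s: "s \<in> S" "X = Bd s" by blast
      have s1: "s \<subseteq> N0 \<inter> {..m}" "good s" using s(1) unfolding S_def by simp_all
      have "finite s" using s1(1) by (rule finite_subset) (simp add: finite_Int)
      moreover have "s \<subseteq> N0" using s1(1) by simp
      ultimately have "finite (Bd s)" using Bd_fin s1(2) by simp
      then show ?thesis using s(2) by simp
    qed
    have "finite (Bd ` S)" using f1 by (rule finite_imageI)
    then have "finite (\<Union>(Bd ` S))" using f2 by (rule finite_Union)
    then show ?thesis unfolding Fam_def S_def .
  qed
  have thr_ge: "n \<le> thr m" if "s \<subseteq> N0 \<inter> {..m}" "good s" "n \<in> Bd s" for s m n
  proof -
    have "n \<in> \<Union>(Fam m)" using that unfolding Fam_def by blast
    then show ?thesis unfolding thr_def using Fam_fin by simp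
  qed
  define b where "b = bseq thr N0"
  have b0: "b 0 \<in> N0" "thr 0 < b 0" using bseq_props(1)[OF N0, of thr] unfolding b_def by auto
  have bS: "b (Suc k) \<in> N0" "b k < b (Suc k)" "thr (b k) < b (Suc k)" for k
    using bseq_props(2)[OF N0, of thr k] unfolding b_def by auto
  have bN: "b k \<in> N0" for k using b0 bS by (cases k) auto
  have sm: "strict_mono b" using bS(2) strict_mono_Suc_iff by blast
  define pv where "pv k = (case k of 0 \<Rightarrow> 0 | Suc j \<Rightarrow> b j)" for k
  have pv1: "thr (pv k) < b k" for k using b0 bS unfolding pv_def by (cases k) auto
  have pv2: "b j \<le> pv k" if "j < k" for j k
  proof (cases k)
    case 0 then show ?thesis using that by simp
  next
    case (Suc k') then have "j \<le> k'" using that by simp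
    then show ?thesis using sm Suc unfolding pv_def by (simp add: strict_mono_less_eq)
  qed
  have inv: "good s" if "s \<subseteq> b ` {..<k}" for k s
    using that
  proof (induction k arbitrary: s)
    case 0 then have "s = {}" by simp
    then show ?case using r0 unfolding good_def by simp
  next
    case (Suc k)
    define s' where "s' = s - {b k}"
    have s's: "s' \<subseteq> b ` {..<k}" using Suc.prems unfolding s'_def by (auto simp: lessThan_Suc)
    then have gs': "good s'" using Suc.IH by blast
    show ?case
    proof (cases "b k \<in> s")
      case False then have "s = s'" unfolding s'_def by blast
      then show ?thesis using gs' by simp
    next
      case True
      then have ss: "s = insert (b k) s'" unfolding s'_def by blast
      have s'N: "s' \<subseteq> N0 \<inter> {..pv k}"
      proof
        fix x assume "x \<in> s'"
        then obtain j where "j < k" "x = b j" using s's by blast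
        then show "x \<in> N0 \<inter> {..pv k}" using bN pv2 by simp
      qed
      have "b k \<in> tlN N0 s'"
      proof -
        have "x < b k" if "x \<in> s'" for x
        proof -
          obtain j where "j < k" "x = b j" using s's \<open>x \<in> s'\<close> by blast
          then show ?thesis using sm by (simp add: strict_mono_less)
        qed
        then show ?thesis unfolding tlN_def using bN by blast
      qed
      moreover have "b k \<notin> Bd s'"
      proof
        assume "b k \<in> Bd s'"
        then have "b k \<le> thr (pv k)" using thr_ge[OF s'N gs'] by blast
        then show False using pv1[of k] by simp
      qed
      ultimately have "good (insert (b k) s')" unfolding Bd_def by blast
      then show ?thesis using ss by simp
    qed
  qed
  define N where "N = range b"
  have NN0: "N \<subseteq> N0" unfolding N_def using bN by blast
  have Ninf: "infinite N" unfolding N_def using sm strict_mono_imp_inj_on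
    by (metis finite_imageD infinite_UNIV_nat)
  have "s \<notin> F" if s: "finite s" "s \<subseteq> N" for s
  proof
    assume sF: "s \<in> F"
    have "s \<subseteq> b ` {..<Suc (Max s)}"
    proof
      fix x assume "x \<in> s"
      then obtain j where j: "x = b j" using s unfolding N_def by blast
      have "j \<le> b j" using sm by (simp add: strict_mono_imp_increasing)
      moreover have "x \<le> Max s" using s(1) \<open>x \<in> s\<close> by simp
      ultimately show "x \<in> b ` {..<Suc (Max s)}" using j by auto
    qed
    then have "good s" using inv by blast
    moreover have "s \<subseteq> N0" using s NN0 by blast
    then have "infinite (tlN N0 s)" using tlN_infinite N0 s(1) by blast
    moreover have "acc F (tlN N0 s) s"
      unfolding acc_def
    proof (intro allI impI)
      fix Z assume "Z \<subseteq> tlN N0 s" "infinite Z"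
      have "init_seg {} Z" unfolding init_seg_def by blast
      then show "\<exists>u. finite u \<and> init_seg u Z \<and> s \<union> u \<in> F" using sF by (intro exI[of _ "{}"]) simp
    qed
    ultimately show False unfolding good_def rej_def by blast
  qed
  then show ?thesis using NN0 Ninf by blast
qed

lemma galvin:
  assumes "infinite M"
  shows "\<exists>N \<subseteq> M. infinite N \<and> ((\<forall>s. finite s \<longrightarrow> s \<subseteq> N \<longrightarrow> s \<notin> F) \<or>
     (\<forall>Z. Z \<subseteq> N \<longrightarrow> infinite Z \<longrightarrow> (\<exists>u. finite u \<and> init_seg u Z \<and> u \<in> F)))"
proof -
  obtain N0 where N0: "N0 \<subseteq> M" "infinite N0" "\<forall>s. finite s \<longrightarrow> s \<subseteq> N0 \<longrightarrow> dec F (tlN N0 s) s"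
    using galvin_diag[OF assms, of F] by blast
  have "dec F N0 {}" using N0(3) by (metis empty_subsetI finite.emptyI tlN_empty)
  then show ?thesis
  proof (unfold dec_def, elim disjE)
    assume "acc F N0 {}"
    then have "\<forall>Z. Z \<subseteq> N0 \<longrightarrow> infinite Z \<longrightarrow> (\<exists>u. finite u \<and> init_seg u Z \<and> u \<in> F)"
      unfolding acc_def by simp
    then show ?thesis using N0 by blast
  next
    assume "rej F N0 {}"
    then obtain N where "N \<subseteq> N0" "infinite N" "\<forall>s. finite s \<longrightarrow> s \<subseteq> N \<longrightarrow> s \<notin> F"
      using galvin_thin[OF N0(2,3)] by blast
    then show ?thesis using N0(1) by blast
  qed
qed

lemma barrier_partition:
  assumes B: "barrier B"
  shows "\<exists>Y \<subseteq> \<Union>B. infinite Y \<and> ((\<forall>s\<in>B. s \<subseteq> Y \<longrightarrow> Q s) \<or> (\<forall>s\<in>B. s \<subseteq> Y \<longrightarrow> \<not> Q s))"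
proof -
  define F where "F = {s\<in>B. Q s}"
  obtain N where N: "N \<subseteq> \<Union>B" "infinite N"
    and alt: "(\<forall>s. finite s \<longrightarrow> s \<subseteq> N \<longrightarrow> s \<notin> F) \<or>
     (\<forall>Z. Z \<subseteq> N \<longrightarrow> infinite Z \<longrightarrow> (\<exists>u. finite u \<and> init_seg u Z \<and> u \<in> F))"
    using galvin[OF barrier_Union_infinite[OF B], of F] by blast
  from alt show ?thesis
  proof (elim disjE)
    assume H: "\<forall>s. finite s \<longrightarrow> s \<subseteq> N \<longrightarrow> s \<notin> F"
    have "\<forall>s\<in>B. s \<subseteq> N \<longrightarrow> \<not> Q s"
    proof (intro ballI impI)
      fix s assume "s \<in> B" "s \<subseteq> N"
      moreover have "finite s" using barrier_fin[OF B \<open>s \<in> B\<close>] .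
      ultimately show "\<not> Q s" using H unfolding F_def by blast
    qed
    then show ?thesis using N by blast
  next
    assume H: "\<forall>Z. Z \<subseteq> N \<longrightarrow> infinite Z \<longrightarrow> (\<exists>u. finite u \<and> init_seg u Z \<and> u \<in> F)"
    have "\<forall>s\<in>B. s \<subseteq> N \<longrightarrow> Q s"
    proof (intro ballI impI)
      fix t assume t: "t \<in> B" "t \<subseteq> N"
      have tf: "finite t" using barrier_fin[OF B t(1)] .
      define Z where "Z = t \<union> tlN N t"
      have Zinf: "infinite Z" unfolding Z_def using tlN_infinite[OF N(2) tf] by simp
      have ZN: "Z \<subseteq> N" unfolding Z_def using t(2) tlN_sub by blast
      obtain u where u: "init_seg u Z" "u \<in> F" using H Zinf ZN by blast
      have ti: "init_seg t Z"
      proof -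
        have "y \<in> t" if "x \<in> t" "y \<in> Z" "y < x" for x y
        proof (rule ccontr)
          assume "y \<notin> t"
          then have "y \<in> tlN N t" using that(2) unfolding Z_def by blast
          then have "x < y" using that(1) unfolding tlN_def by blast
          then show False using that(3) by simp
        qed
        moreover have "t \<subseteq> Z" unfolding Z_def by blast
        ultimately show ?thesis unfolding init_seg_def by blast
      qed
      have "u \<in> B" "Q u" using u(2) unfolding F_def by auto
      moreover have "u = t" using barrier_unique[OF B \<open>u \<in> B\<close> t(1) u(1) ti] .
      ultimately show "Q t" by simp
    qed
    then show ?thesis using N by blast
  qed
qed

definition badin :: "('a \<Rightarrow> 'a \<Rightarrow> bool) \<Rightarrow> 'a set \<Rightarrow> bool" where
  "badin le D \<longleftrightarrow> (\<exists>B f. barrier B \<and> f ` B \<subseteq> D \<and> \<not> good_map le B f)"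

lemma good_map_mono: "B' \<subseteq> B \<Longrightarrow> good_map le B' f \<Longrightarrow> good_map le B f"
  unfolding good_map_def by blast

lemma restrict_bad:
  assumes B: "barrier B" and bad: "\<not> good_map le B f" and Y: "Y \<subseteq> \<Union>B" "infinite Y"
    and D': "\<forall>s\<in>B. s \<subseteq> Y \<longrightarrow> f s \<in> D'"
  shows "badin le D'"
proof -
  let ?B = "{s\<in>B. s \<subseteq> Y}"
  have "barrier ?B" using barrier_restrict(1)[OF B Y] .
  moreover have "f ` ?B \<subseteq> D'" using D' by blast
  moreover have "\<not> good_map le ?B f" using bad good_map_mono[of ?B B le f] by blast
  ultimately show ?thesis unfolding badin_def by blast
qed

lemma part_bad:
  assumes B: "barrier B" and bad: "\<not> good_map le B f" and fD: "f ` B \<subseteq> D1 \<union> D2"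
  shows "badin le D1 \<or> badin le D2"
proof -
  obtain Y where Y: "Y \<subseteq> \<Union>B" "infinite Y"
    and alt: "(\<forall>s\<in>B. s \<subseteq> Y \<longrightarrow> f s \<in> D1) \<or> (\<forall>s\<in>B. s \<subseteq> Y \<longrightarrow> \<not> f s \<in> D1)"
    using barrier_partition[OF B, of "\<lambda>s. f s \<in> D1"] by blast
  from alt show ?thesis
  proof (elim disjE)
    assume "\<forall>s\<in>B. s \<subseteq> Y \<longrightarrow> f s \<in> D1"
    then show ?thesis using restrict_bad[OF B bad Y] by blast
  next
    assume "\<forall>s\<in>B. s \<subseteq> Y \<longrightarrow> \<not> f s \<in> D1"
    then have "\<forall>s\<in>B. s \<subseteq> Y \<longrightarrow> f s \<in> D2" using fD by blast
    then show ?thesis using restrict_bad[OF B bad Y] by blast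
  qed
qed

primrec Vs :: "('a \<Rightarrow> 'a set) \<Rightarrow> nat \<Rightarrow> 'a \<Rightarrow> 'a set" where
  "Vs S 0 x = {x}"
| "Vs S (Suc k) x = \<Union>(Vs S k ` S x)"

lemma Vs_fin:
  assumes "\<forall>y\<in>A. S y \<subseteq> A \<and> finite (S y)" "x \<in> A"
  shows "finite (Vs S k x) \<and> Vs S k x \<subseteq> A"
  using assms(2)
proof (induction k arbitrary: x)
  case 0 then show ?case by simp
next
  case (Suc k)
  have S: "S x \<subseteq> A" "finite (S x)" using assms(1) Suc.prems by auto
  have "finite (Vs S k y) \<and> Vs S k y \<subseteq> A" if "y \<in> S x" for y using Suc.IH S(1) that by blast
  then show ?case using S(2) by auto
qed

lemma mn_union:
  assumes "finite A0" "A0 \<noteq> {}" "\<forall>a\<in>A0. \<forall>w\<in>W. a < w"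
  shows "mn (A0 \<union> W) = Min A0"
  unfolding mn_def
proof (rule Least_equality)
  show "Min A0 \<in> A0 \<union> W" using assms by simp
  fix y assume "y \<in> A0 \<union> W"
  then show "Min A0 \<le> y"
  proof
    assume "y \<in> A0" then show ?thesis using assms(1) by simp
  next
    assume "y \<in> W"
    then have "Min A0 < y" using assms Min_in by blast
    then show ?thesis by simp
  qed
qed

lemma reach:
  assumes B: "barrier B" and step: "\<forall>s\<in>B. \<forall>t\<in>B. tri s t \<longrightarrow> f t \<in> S (f s)"
  shows "finite A0 \<Longrightarrow> card A0 = n \<Longrightarrow> infinite W \<Longrightarrow> A0 \<union> W \<subseteq> \<Union>B \<Longrightarrow>
     \<forall>a\<in>A0. \<forall>w\<in>W. a < w \<Longrightarrow> f (bf B W) \<in> Vs S n (f (bf B (A0 \<union> W)))"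
proof (induction n arbitrary: A0)
  case 0
  then have "A0 = {}" by simp
  then show ?case by simp
next
  case (Suc n)
  then have ne: "A0 \<noteq> {}" by auto
  define m where "m = Min A0"
  have mA: "m \<in> A0" unfolding m_def using Suc.prems(1) ne by simp
  have mnZ: "mn (A0 \<union> W) = m" unfolding m_def using mn_union[OF Suc.prems(1) ne Suc.prems(5)] .
  have mW: "m \<notin> W" using mA Suc.prems(5) by blast
  define A1 where "A1 = A0 - {m}"
  have A1: "finite A1" "card A1 = n" "A1 \<union> W \<subseteq> \<Union>B" "\<forall>a\<in>A1. \<forall>w\<in>W. a < w"
    unfolding A1_def using Suc.prems mA by auto
  have IH: "f (bf B W) \<in> Vs S n (f (bf B (A1 \<union> W)))" using Suc.IH[OF A1(1,2) Suc.prems(3) A1(3,4)] .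
  have Zeq: "A0 \<union> W - {mn (A0 \<union> W)} = A1 \<union> W" unfolding mnZ A1_def using mW by blast
  have Zinf: "infinite (A0 \<union> W)" using Suc.prems(3) by simp
  have tr: "tri (bf B (A0 \<union> W)) (bf B (A1 \<union> W))"
    using shift_tri[OF B Suc.prems(4) Zinf] unfolding Zeq .
  have "bf B (A0 \<union> W) \<in> B" using bf_props[OF B Suc.prems(4) Zinf] by blast
  moreover have "bf B (A1 \<union> W) \<in> B" using bf_props[OF B A1(3)] Suc.prems(3) by simp
  ultimately have "f (bf B (A1 \<union> W)) \<in> S (f (bf B (A0 \<union> W)))" using step tr by blast
  then show ?case using IH by auto
qed

definition downset :: "'a set \<Rightarrow> ('a \<Rightarrow> 'a \<Rightarrow> bool) \<Rightarrow> 'a set \<Rightarrow> bool" where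
  "downset P le D \<longleftrightarrow> D \<subseteq> P \<and> (\<forall>x\<in>D. \<forall>y\<in>P. le y x \<longrightarrow> y \<in> D)"

lemma upper_bound_fin:
  assumes dir: "\<forall>x\<in>D. \<forall>y\<in>D. \<exists>z\<in>D. le x z \<and> le y z" and ne: "D \<noteq> {}"
    and qo: "quasi_order_on P le" and DP: "D \<subseteq> P"
    and A: "finite A" "A \<subseteq> D"
  shows "\<exists>z\<in>D. \<forall>a\<in>A. le a z"
  using A
proof (induction A rule: finite_induct)
  case empty then show ?case using ne by blast
next
  case (insert a A)
  then obtain z where z: "z \<in> D" "\<forall>b\<in>A. le b z" by blast
  have aD: "a \<in> D" using insert.prems by blast
  obtain z' where z': "z' \<in> D" "le a z'" "le z z'" using dir aD z(1) by blast
  have "\<forall>b\<in>A. le b z'"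
  proof
    fix b assume "b \<in> A"
    then have "le b z" "b \<in> P" using z insert.prems DP by auto
    moreover have "z \<in> P" "z' \<in> P" using z(1) z'(1) DP by auto
    ultimately show "le b z'" using qo z'(3) unfolding quasi_order_on_def by blast
  qed
  then show ?case using z' by blast
qed

lemma chain_ideal:
  fixes g :: "nat \<Rightarrow> 'a"
  assumes po: "poset_on P le" and wqo: "wqo_on P le"
    and g: "inj g" "\<And>n. g n \<in> P"
  shows "\<exists>H. H \<noteq> {} \<and> ideal_of P le {z\<in>P. \<exists>i\<in>H. le z (g i)} \<and> \<not> principal le {z\<in>P. \<exists>i\<in>H. le z (g i)}"
proof -
  have qo: "quasi_order_on P le" using po unfolding poset_on_def by blast
  have refl: "le x x" if "x \<in> P" for x using qo that unfolding quasi_order_on_def by blast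
  have trans: "le x z" if "x \<in> P" "y \<in> P" "z \<in> P" "le x y" "le y z" for x y z
    using qo that unfolding quasi_order_on_def by blast
  have anti: "x = y" if "x \<in> P" "y \<in> P" "le x y" "le y x" for x y
    using po that unfolding poset_on_def by blast
  obtain H where H: "infinite H" "\<forall>i\<in>H. \<forall>j\<in>H. i < j \<longrightarrow> le (g i) (g j)"
    proof -
    have "\<exists>H::nat set. infinite H \<and> (\<forall>i\<in>H. \<forall>j\<in>H. i < j \<longrightarrow> le (g i) (g j))"
      by (rule wqo_mono_subseq[OF wqo g(2)])
    then show ?thesis using that by blast
  qed
  have mono: "le (g i) (g j)" if "i \<in> H" "j \<in> H" "i \<le> j" for i j
  proof (cases "i = j")
    case True then show ?thesis using refl g(2) by simp
  next
    case False then show ?thesis using H(2) that by simp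
  qed
  define I where "I = {z\<in>P. \<exists>i\<in>H. le z (g i)}"
  have Hne: "H \<noteq> {}" using H(1) by auto
  have gI: "g i \<in> I" if "i \<in> H" for i unfolding I_def using that refl g(2) by blast
  have "ideal_of P le I"
    unfolding ideal_of_def
  proof (intro conjI)
    show "I \<subseteq> P" unfolding I_def by blast
    show "I \<noteq> {}" using gI Hne by blast
    show "\<forall>x\<in>I. \<forall>y\<in>P. le y x \<longrightarrow> y \<in> I"
    proof (intro ballI impI)
      fix x y assume "x \<in> I" "y \<in> P" "le y x"
      then obtain i where "i \<in> H" "le x (g i)" "x \<in> P" unfolding I_def by blast
      then have "le y (g i)" using trans[OF \<open>y \<in> P\<close> \<open>x \<in> P\<close> g(2)[of i] \<open>le y x\<close>] by blast
      then show "y \<in> I" unfolding I_def using \<open>i \<in> H\<close> \<open>y \<in> P\<close> by blast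
    qed
    show "\<forall>x\<in>I. \<forall>y\<in>I. \<exists>z\<in>I. le x z \<and> le y z"
    proof (intro ballI)
      fix x y assume "x \<in> I" "y \<in> I"
      then obtain i j where ij: "i \<in> H" "le x (g i)" "x \<in> P" "j \<in> H" "le y (g j)" "y \<in> P"
        unfolding I_def by blast
      define k where "k = max i j"
      have kH: "k \<in> H" unfolding k_def using ij by (simp add: max_def)
      have "le (g i) (g k)" using mono[OF ij(1) kH] unfolding k_def by simp
      moreover have "le (g j) (g k)" using mono[OF ij(4) kH] unfolding k_def by simp
      ultimately have "le x (g k)" "le y (g k)"
        using trans[OF ij(3) g(2)[of i] g(2)[of k] ij(2)] trans[OF ij(6) g(2)[of j] g(2)[of k] ij(5)] by blast+
      then show "\<exists>z\<in>I. le x z \<and> le y z" using gI kH by blast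
    qed
  qed
  moreover have "\<not> principal le I"
  proof
    assume "principal le I"
    then obtain m where m: "m \<in> I" "\<forall>x\<in>I. le x m" unfolding principal_def by blast
    then obtain i where i: "i \<in> H" "le m (g i)" "m \<in> P" unfolding I_def by blast
    obtain j where j: "j \<in> H" "i < j" using H(1) by (meson infinite_nat_iff_unbounded)
    have "le (g j) m" using m gI j by blast
    then have "le (g j) (g i)" using trans[OF g(2)[of j] i(3) g(2)[of i]] i(2) by blast
    moreover have "le (g i) (g j)" using H(2) i j by blast
    ultimately have "g i = g j" using anti[OF g(2)[of i] g(2)[of j]] by blast
    then show False using g(1) j(2) by (simp add: inj_eq)
  qed
  ultimately show ?thesis using Hne unfolding I_def by blast
qed

lemma step_lemma:
  assumes po: "poset_on P le" and wqo: "wqo_on P le" and fin: "finite (nonprincipal_ideals P le)"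
    and D: "downset P le D" and bad: "badin le D"
  shows "\<exists>D'. downset P le D' \<and> D' \<subset> D \<and> badin le D'"
proof -
  have qo: "quasi_order_on P le" using po unfolding poset_on_def by blast
  have refl: "le x x" if "x \<in> P" for x using qo that unfolding quasi_order_on_def by blast
  have trans: "le x z" if "x \<in> P" "y \<in> P" "z \<in> P" "le x y" "le y z" for x y z
    using qo that unfolding quasi_order_on_def by blast
  have anti: "x = y" if "x \<in> P" "y \<in> P" "le x y" "le y x" for x y
    using po that unfolding poset_on_def by blast
  obtain B f where B: "barrier B" and fB: "f ` B \<subseteq> D" and nb: "\<not> good_map le B f"
    using bad unfolding badin_def by blast
  have DP: "D \<subseteq> P" and Ddown: "\<And>x y. x \<in> D \<Longrightarrow> y \<in> P \<Longrightarrow> le y x \<Longrightarrow> y \<in> D"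
    using D unfolding downset_def by blast+
  have "B \<noteq> {}" using barrier_inf[OF B] by auto
  then have Dne: "D \<noteq> {}" using fB by blast
  show ?thesis
  proof (cases "\<forall>x\<in>D. \<forall>y\<in>D. \<exists>z\<in>D. le x z \<and> le y z")
    case False
    then obtain x y where xy: "x \<in> D" "y \<in> D" "\<forall>z\<in>D. \<not> (le x z \<and> le y z)" by blast
    define D1 where "D1 = {z\<in>D. \<not> le x z}"
    define D2 where "D2 = {z\<in>D. \<not> le y z}"
    have "D \<subseteq> D1 \<union> D2" unfolding D1_def D2_def using xy(3) by blast
    then have "f ` B \<subseteq> D1 \<union> D2" using fB by blast
    then have bb: "badin le D1 \<or> badin le D2" using part_bad[OF B nb] by blast
    have dn: "downset P le {z\<in>D. \<not> le a z}" if "a \<in> D" for a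
      unfolding downset_def
    proof (intro conjI ballI impI)
      show "{z\<in>D. \<not> le a z} \<subseteq> P" using DP by blast
      fix z w assume z: "z \<in> {z\<in>D. \<not> le a z}" and w: "w \<in> P" "le w z"
      have "w \<in> D" using Ddown z w by blast
      moreover have "\<not> le a w"
      proof
        assume "le a w"
        then have "le a z" using trans[of a w z] that DP w z by blast
        then show False using z by blast
      qed
      ultimately show "w \<in> {z\<in>D. \<not> le a z}" by blast
    qed
    have ps: "{z\<in>D. \<not> le a z} \<subset> D" if "a \<in> D" for a
      using that refl DP by blast
    show ?thesis using bb dn[OF xy(1)] dn[OF xy(2)] ps[OF xy(1)] ps[OF xy(2)]
      unfolding D1_def D2_def by blast
  next
    case True
    note dir = True
    show ?thesis
    proof (cases "\<exists>m\<in>D. \<forall>z\<in>D. le z m")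
      case True
      then obtain m where m: "m \<in> D" "\<forall>z\<in>D. le z m" by blast
      define D' where "D' = D - {m}"
      have "f ` B \<subseteq> {m} \<union> D'" using fB unfolding D'_def by blast
      then have "badin le {m} \<or> badin le D'" using part_bad[OF B nb] by blast
      moreover have "\<not> badin le {m}"
      proof
        assume "badin le {m}"
        then obtain B1 f1 where B1: "barrier B1" "f1 ` B1 \<subseteq> {m}" "\<not> good_map le B1 f1"
          unfolding badin_def by blast
        obtain s t where st: "s \<in> B1" "t \<in> B1" "tri s t" using barrier_tri_exists[OF B1(1)] by blast
        have "f1 s = m" "f1 t = m" using st B1(2) by blast+
        then have "le (f1 s) (f1 t)" using refl m(1) DP by auto
        then show False using B1(3) st unfolding good_map_def by blast
      qed
      ultimately have "badin le D'" by blast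
      moreover have "downset P le D'"
        unfolding downset_def D'_def
      proof (intro conjI ballI impI)
        show "D - {m} \<subseteq> P" using DP by blast
        fix z w assume z: "z \<in> D - {m}" and w: "w \<in> P" "le w z"
        have "w \<in> D" using Ddown z w by blast
        moreover have "w \<noteq> m"
        proof
          assume "w = m"
          then have "le m z" using w by simp
          moreover have "le z m" using m z by blast
          ultimately have "z = m" using anti m(1) z DP by blast
          then show False using z by blast
        qed
        ultimately show "w \<in> D - {m}" by blast
      qed
      moreover have "D' \<subset> D" unfolding D'_def using m(1) by blast
      ultimately show ?thesis by blast
    next
      case False
      note np = False
      have Did: "ideal_of P le D" unfolding ideal_of_def using DP Dne Ddown dir by blast
      have Dnp: "\<not> principal le D" unfolding principal_def using np by blast
      define J where "J = {I \<in> nonprincipal_ideals P le. I \<subset> D}"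
      define E where "E = \<Union>J"
      have Jfin: "finite J" using fin unfolding J_def by simp
      have JD: "\<And>I. I \<in> J \<Longrightarrow> I \<subset> D" unfolding J_def by blast
      have Jid: "\<And>I. I \<in> J \<Longrightarrow> ideal_of P le I" unfolding J_def nonprincipal_ideals_def by blast
      have ED: "E \<subseteq> D" unfolding E_def using JD by blast
      have Edown: "downset P le E"
        unfolding downset_def
      proof (intro conjI ballI impI)
        show "E \<subseteq> P" using ED DP by blast
        fix z w assume z: "z \<in> E" and w: "w \<in> P" "le w z"
        then obtain I where I: "I \<in> J" "z \<in> I" unfolding E_def by blast
        then have "w \<in> I" using Jid[OF I(1)] w unfolding ideal_of_def by blast
        then show "w \<in> E" using I(1) unfolding E_def by blast
      qed
      have EneD: "E \<noteq> D"
      proof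
        assume EqD: "E = D"
        have "\<forall>I\<in>J. \<exists>x. x \<in> D - I" using JD by blast
        then obtain xs where xs: "\<forall>I\<in>J. xs I \<in> D - I" by metis
        have "finite (xs ` J)" using Jfin by simp
        moreover have "xs ` J \<subseteq> D" using xs by blast
        ultimately obtain z where z: "z \<in> D" "\<forall>a\<in>xs ` J. le a z"
          using upper_bound_fin[OF dir Dne qo DP] by blast
        then obtain I where I: "I \<in> J" "z \<in> I" using EqD unfolding E_def by blast
        have "le (xs I) z" using z I by blast
        moreover have "xs I \<in> P" using xs I DP by blast
        ultimately have "xs I \<in> I" using Jid[OF I(1)] I(2) unfolding ideal_of_def by blast
        then show False using xs I by blast
      qed
      have EsD: "E \<subset> D" using ED EneD by blast
      have "f ` B \<subseteq> E \<union> (D - E)" using fB by blast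
      then have "badin le E \<or> badin le (D - E)" using part_bad[OF B nb] by blast
      then show ?thesis
      proof
        assume "badin le E"
        then show ?thesis using Edown EsD by blast
      next
        assume "badin le (D - E)"
        then obtain B' f' where B': "barrier B'" and fB': "f' ` B' \<subseteq> D - E"
          and nb': "\<not> good_map le B' f'" unfolding badin_def by blast
        define S where "S x = {y \<in> D - E. \<not> le x y}" for x
        have Sfin: "finite (S x)" if x: "x \<in> D - E" for x
        proof (rule ccontr)
          assume "infinite (S x)"
          then obtain g :: "nat \<Rightarrow> 'a" where g: "inj g" "range g \<subseteq> S x"
            using infinite_countable_subset by blast
          have gP: "g n \<in> P" for n using g(2) DP unfolding S_def by blast
          obtain H where H: "H \<noteq> {}" "ideal_of P le {z\<in>P. \<exists>i\<in>H. le z (g i)}"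
            "\<not> principal le {z\<in>P. \<exists>i\<in>H. le z (g i)}"
            using chain_ideal[OF po wqo g(1) gP] by blast
          define I where "I = {z\<in>P. \<exists>i\<in>H. le z (g i)}"
          have "I \<subseteq> D"
          proof
            fix z assume "z \<in> I"
            then obtain i where "z \<in> P" "le z (g i)" unfolding I_def by blast
            moreover have "g i \<in> D" using g(2) unfolding S_def by blast
            ultimately show "z \<in> D" using Ddown by blast
          qed
          moreover have "x \<notin> I"
          proof
            assume "x \<in> I"
            then obtain i where "le x (g i)" unfolding I_def by blast
            moreover have "\<not> le x (g i)" using g(2) unfolding S_def by blast
            ultimately show False by blast
          qed
          ultimately have "I \<subset> D" using x by blast
          then have "I \<in> J" using H(2,3) unfolding J_def nonprincipal_ideals_def I_def by blast
          then have IE: "I \<subseteq> E" unfolding E_def by blast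
          obtain i where "i \<in> H" using H(1) by blast
          then have "g i \<in> I" unfolding I_def using refl gP by blast
          moreover have "g i \<notin> E" using g(2) unfolding S_def by blast
          ultimately show False using IE by blast
        qed
        have SA: "\<forall>y\<in>D - E. S y \<subseteq> D - E \<and> finite (S y)" using Sfin unfolding S_def by blast
        have stp: "\<forall>s\<in>B'. \<forall>t\<in>B'. tri s t \<longrightarrow> f' t \<in> S (f' s)"
        proof (intro ballI impI)
          fix s t assume st: "s \<in> B'" "t \<in> B'" "tri s t"
          then have "\<not> le (f' s) (f' t)" using nb' unfolding good_map_def by blast
          moreover have "f' t \<in> D - E" using fB' st by blast
          ultimately show "f' t \<in> S (f' s)" unfolding S_def by blast
        qed
        have "B' \<noteq> {}" using barrier_inf[OF B'] by auto
        then obtain s0 where s0: "s0 \<in> B'" by blast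
        have s0f: "finite s0" using barrier_fin[OF B' s0] .
        have s0ne: "s0 \<noteq> {}" using barrier_nonempty[OF B' s0] .
        define Y where "Y = tlN (\<Union>B') s0"
        have Yinf: "infinite Y" unfolding Y_def using tlN_infinite[OF barrier_Union_infinite[OF B'] s0f] .
        have YU: "Y \<subseteq> \<Union>B'" unfolding Y_def using tlN_sub by blast
        define V where "V = Vs S (card s0) (f' s0)"
        have fs0: "f' s0 \<in> D - E" using fB' s0 by blast
        have Vfin: "finite V" "V \<subseteq> D - E" using Vs_fin[OF SA fs0] unfolding V_def by blast+
        have inV: "f' t \<in> V" if t: "t \<in> B'" "t \<subseteq> Y" for t
        proof -
          have tf: "finite t" using barrier_fin[OF B' t(1)] .
          have tne: "t \<noteq> {}" using barrier_nonempty[OF B' t(1)] .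
          define W where "W = t \<union> tlN (\<Union>B') t"
          have Winf: "infinite W" unfolding W_def using tlN_infinite[OF barrier_Union_infinite[OF B'] tf] by simp
          have tU: "t \<subseteq> \<Union>B'" using t by blast
          have WU: "W \<subseteq> \<Union>B'" unfolding W_def using tU tlN_sub by blast
          have s0U: "s0 \<subseteq> \<Union>B'" using s0 by blast
          have tW: "init_seg t W"
          proof -
            have "y \<in> t" if "x \<in> t" "y \<in> W" "y < x" for x y
            proof (rule ccontr)
              assume "y \<notin> t"
              then have "y \<in> tlN (\<Union>B') t" using that(2) unfolding W_def by blast
              then have "x < y" using that(1) unfolding tlN_def by blast
              then show False using that(3) by simp
            qed
            moreover have "t \<subseteq> W" unfolding W_def by blast
            ultimately show ?thesis unfolding init_seg_def by blast
          qed
          have bW: "bf B' W = t" using bf_eq[OF B' t(1) tW] .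
          have lt: "\<forall>a\<in>s0. \<forall>w\<in>W. a < w"
          proof (intro ballI)
            fix a w assume a: "a \<in> s0" and w: "w \<in> W"
            obtain e where e: "e \<in> t" using tne by blast
            have ea: "a < e" using e t(2) a unfolding Y_def tlN_def by blast
            show "a < w"
            proof (cases "w \<in> t")
              case True then show ?thesis using t(2) a unfolding Y_def tlN_def by blast
            next
              case False
              then have "w \<in> tlN (\<Union>B') t" using w unfolding W_def by blast
              then have "e < w" using e unfolding tlN_def by blast
              then show ?thesis using ea by simp
            qed
          qed
          have s0W: "init_seg s0 (s0 \<union> W)"
          proof -
            have "y \<in> s0" if "x \<in> s0" "y \<in> s0 \<union> W" "y < x" for x y
            proof (rule ccontr)
              assume "y \<notin> s0"
              then have "y \<in> W" using that(2) by blast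
              then have "x < y" using lt that(1) by blast
              then show False using that(3) by simp
            qed
            then show ?thesis unfolding init_seg_def by blast
          qed
          have bs0: "bf B' (s0 \<union> W) = s0" using bf_eq[OF B' s0 s0W] .
          have "f' (bf B' W) \<in> Vs S (card s0) (f' (bf B' (s0 \<union> W)))"
            using reach[OF B' stp s0f HOL.refl[of "card s0"] Winf _ lt] s0U WU by blast
          then show ?thesis unfolding bW bs0 V_def .
        qed
        define D'' where "D'' = {z\<in>P. \<exists>v\<in>V. le z v}"
        have VP: "V \<subseteq> P" using Vfin(2) DP by blast
        have "\<forall>t\<in>B'. t \<subseteq> Y \<longrightarrow> f' t \<in> D''"
        proof (intro ballI impI)
          fix t assume "t \<in> B'" "t \<subseteq> Y"
          then have "f' t \<in> V" using inV by blast
          then show "f' t \<in> D''" unfolding D''_def using VP refl by blast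
        qed
        then have bD: "badin le D''" using restrict_bad[OF B' nb' YU Yinf] by blast
        have dD: "downset P le D''"
          unfolding downset_def
        proof (intro conjI ballI impI)
          show "D'' \<subseteq> P" unfolding D''_def by blast
          fix z w assume z: "z \<in> D''" and w: "w \<in> P" "le w z"
          then obtain v where v: "v \<in> V" "le z v" "z \<in> P" unfolding D''_def by blast
          have "le w v" using trans[OF w(1) v(3) _ w(2) v(2)] v(1) VP by blast
          then show "w \<in> D''" unfolding D''_def using w(1) v(1) by blast
        qed
        have sub: "D'' \<subseteq> D"
        proof
          fix z assume "z \<in> D''"
          then obtain v where v: "v \<in> V" "le z v" "z \<in> P" unfolding D''_def by blast
          have "v \<in> D" using v(1) Vfin(2) by blast
          then show "z \<in> D" using Ddown v by blast
        qed
        have "D'' \<noteq> D"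
        proof
          assume eq: "D'' = D"
          obtain z where z: "z \<in> D" "\<forall>a\<in>V. le a z"
            using upper_bound_fin[OF dir Dne qo DP Vfin(1)] Vfin(2) by blast
          have "\<forall>w\<in>D. le w z"
          proof
            fix w assume "w \<in> D"
            then have "w \<in> D''" using eq by simp
            then obtain v where v: "v \<in> V" "le w v" "w \<in> P" unfolding D''_def by blast
            have "le v z" using z v by blast
            then show "le w z" using trans[OF v(3) _ _ v(2)] v(1) VP z(1) DP by blast
          qed
          then show False using np z(1) by blast
        qed
        then show ?thesis using bD dD sub by blast
      qed
    qed
  qed
qed

lemma no_bad:
  assumes po: "poset_on P le" and wqo: "wqo_on P le" and fin: "finite (nonprincipal_ideals P le)"
  shows "\<not> badin le P"
proof
  assume badP: "badin le P"
  define st where "st D = (SOME D'. downset P le D' \<and> D' \<subset> D \<and> badin le D')" for D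
  define Ds where "Ds n = (st ^^ n) P" for n
  have DsS: "Ds (Suc n) = st (Ds n)" for n unfolding Ds_def by simp
  have stp: "downset P le (st D) \<and> st D \<subset> D \<and> badin le (st D)" if "downset P le D" "badin le D" for D
  proof -
    have "\<exists>D'. downset P le D' \<and> D' \<subset> D \<and> badin le D'" using step_lemma[OF po wqo fin that] .
    then show ?thesis unfolding st_def by (rule someI_ex)
  qed
  have inv: "downset P le (Ds n) \<and> badin le (Ds n)" for n
  proof (induction n)
    case 0
    have "downset P le P" unfolding downset_def by blast
    then show ?case using badP unfolding Ds_def by simp
  next
    case (Suc n) then show ?case using stp DsS by metis
  qed
  have ps: "Ds (Suc n) \<subset> Ds n" for n using stp inv DsS by metis
  have anti: "Ds m \<subseteq> Ds n" if "n \<le> m" for n m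
    using that
  proof (induction m)
    case 0 then show ?case by simp
  next
    case (Suc m)
    show ?case
    proof (cases "n = Suc m")
      case True then show ?thesis by simp
    next
      case False then have "n \<le> m" using Suc.prems by simp
      then show ?thesis using Suc.IH ps[of m] by blast
    qed
  qed
  define x where "x n = (SOME y. y \<in> Ds n - Ds (Suc n))" for n
  have xin: "x n \<in> Ds n - Ds (Suc n)" for n
  proof -
    have "\<exists>y. y \<in> Ds n - Ds (Suc n)" using ps[of n] by blast
    then show ?thesis unfolding x_def by (rule someI_ex)
  qed
  have xP: "x n \<in> P" for n using xin inv[of n] unfolding downset_def by blast
  have "\<exists>H::nat set. infinite H \<and> (\<forall>i\<in>H. \<forall>j\<in>H. i < j \<longrightarrow> le (x i) (x j))"
    by (rule wqo_mono_subseq[OF wqo xP])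
  then obtain H where H: "infinite H" "\<forall>i\<in>H. \<forall>j\<in>H. i < j \<longrightarrow> le (x i) (x j)" by blast
  obtain i where i: "i \<in> H" using H(1) by (metis finite.emptyI ex_in_conv)
  obtain j where j: "j \<in> H" "i < j" using H(1) unfolding infinite_nat_iff_unbounded by blast
  have le: "le (x i) (x j)" using H(2) i j by blast
  have "x j \<in> Ds (Suc i)" using xin[of j] anti[of "Suc i" j] j(2) by auto
  moreover have "downset P le (Ds (Suc i))" using inv by blast
  ultimately have "x i \<in> Ds (Suc i)" using le xP unfolding downset_def by blast
  then show False using xin[of i] by blast
qed

theorem corollary1p3:
  fixes P :: "'a set" and le :: "'a \<Rightarrow> 'a \<Rightarrow> bool"
  assumes "poset_on P le"
    and "wqo_on P le"
    and "finite (nonprincipal_ideals P le)"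
  shows "bqo_on P le"
proof -
  have nb: "\<not> badin le P" using no_bad[OF assms] .
  have qo: "quasi_order_on P le" using assms(1) unfolding poset_on_def by blast
  have "good_map le B f" if "barrier B" "f ` B \<subseteq> P" for B f
    using nb that unfolding badin_def by blast
  then have "alpha_bqo_on \<alpha> P le" for \<alpha> :: "nat rel"
    unfolding alpha_bqo_on_def by blast
  then show ?thesis unfolding bqo_on_def using qo by blast
qed

end
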